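(* Let $C(x)=\log_2(1+x)$. A device $U_i$ transmits to a machine-type device $M_i$ at fixed rate $R_M>0$ with power $P_{U_i}$, while a device $U_j$ simultaneously transmits to base station $B$ with power $P_{U_j}\in[0,P_U^{Max}]$ and rate $R_{U_j}$. The constraints are: (i) $M_i$ must decode $U_i$ treating $U_j$ as noise, i.e. $P_{U_j}\le P^\ast_{U_j}:=\left(\frac{P_{U_i}|h_{U_i,M_i}|^2}{2^{R_M}-1}-\sigma_M^2\right)\frac{1}{|h_{U_j,M_i}|^2}$; (ii) at $B$, $$R_{U_j}\le\begin{cases}C(\gamma_{U_j,B}) & \text{if } R_M\le C\!\left(\frac{\gamma_{U_i,B}}{1+\gamma_{U_j,B}}\right),\\ C\!\left(\frac{\gamma_{U_j,B}}{1+\gamma_{U_i,B}}\right) & \text{if } R_M> C\!\left(\frac{\gamma_{U_i,B}}{1+\gamma_{U_j,B}}\right).\end{cases}$$ Define $$P^{(1)}_{U_j}=\min\left[P_U^{Max},\ \left(\frac{P_{U_i}|h_{U_i,B}|^2}{2^{R_M}-1}-\sigma_B^2\right)\frac{1}{|h_{U_j,B}|^2},\ P^\ast_{U_j}\right],\qquad P^{(2)}_{U_j}=\min\left[P_U^{Max},\ P^\ast_{U_j}\right],$$ and let $\gamma^{(m)}_{U_j,B}=P^{(m)}_{U_j}|h_{U_j,B}|^2/\sigma_B^2$. Then every rate $R_{U_j,B}$ achievable by $U_j$ under these constraints satisfies $$R_{U_j,B}\le\max\left[C\big(\gamma^{(1)}_{U_j,B}\big),\ C\!\left(\frac{\ga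mma^{(2)}_{U_j,B}}{1+\gamma_{U_i,B}}\right)\right].$$
   Context: $|h_{X,Y}|^2>0$ are instantaneous channel power gains, $\sigma_M^2$ and $\sigma_B^2$ are the noise variances at $M_i$ and $B$, $\gamma_{X,B}=P_X|h_{X,B}|^2/\sigma_B^2$, and $P_U^{Max}$ is the maximal device transmit power. $M_i$ cannot perform interference cancellation, while $B$ receives the signals of $U_i$ and $U_j$ over a Gaussian multiple access channel and may decode and cancel $U_i$'s signal before decoding $U_j$'s. *)

theory Defs
  imports Complex_Main
begin

definition C :: "real \<Rightarrow> real" where
  "C x = log 2 (1 + x)"

end

theory Submission
  imports Defs
begin

lemma C_mono: "0 \<le> x \<Longrightarrow> x \<le> y \<Longrightarrow> C x \<le> C y"
  unfolding C_def by simp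

theorem theorem2:
  fixes R_M P_Ui P_Uj P_max R_Uj sigmaM2 sigmaB2
        hUiMi hUjMi hUiB hUjB :: real
  assumes RM_pos: "R_M > 0"
    and gains: "hUiMi > 0" "hUjMi > 0" "hUiB > 0" "hUjB > 0"
    and noise: "sigmaM2 > 0" "sigmaB2 > 0"
    and PUi_nonneg: "P_Ui \<ge> 0"
    and PUj_range: "0 \<le> P_Uj" "P_Uj \<le> P_max"
    and c1: "P_Uj \<le> (P_Ui * hUiMi / (2 powr R_M - 1) - sigmaM2) / hUjMi"
    and c2: "R_Uj \<le>
      (if R_M \<le> C ((P_Ui * hUiB / sigmaB2) / (1 + P_Uj * hUjB / sigmaB2))
       then C (P_Uj * hUjB / sigmaB2)
       else C ((P_Uj * hUjB / sigmaB2) / (1 + P_Ui * hUiB / sigmaB2)))"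
  shows "R_Uj \<le>
    (let Pstar = (P_Ui * hUiMi / (2 powr R_M - 1) - sigmaM2) / hUjMi;
         P1 = min P_max (min ((P_Ui * hUiB / (2 powr R_M - 1) - sigmaB2) / hUjB) Pstar);
         P2 = min P_max Pstar
     in max (C (P1 * hUjB / sigmaB2))
            (C ((P2 * hUjB / sigmaB2) / (1 + P_Ui * hUiB / sigmaB2))))"
proof -
  define Pstar where "Pstar = (P_Ui * hUiMi / (2 powr R_M - 1) - sigmaM2) / hUjMi"
  define Q where "Q = (P_Ui * hUiB / (2 powr R_M - 1) - sigmaB2) / hUjB"
  define a where "a = P_Ui * hUiB / sigmaB2"
  define b where "b = P_Uj * hUjB / sigmaB2"
  have a0: "a \<ge> 0" and b0: "b \<ge> 0" using gains noise PUi_nonneg PUj_range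
    by (auto simp: a_def b_def)
  have g1: "2 powr R_M > 1" using RM_pos by simp
  have P2: "P_Uj \<le> min P_max Pstar" using c1 PUj_range Pstar_def by simp
  show ?thesis
  proof (cases "R_M \<le> C (a / (1 + b))")
    case True
    have "2 powr R_M \<le> 2 powr (log 2 (1 + a/(1+b)))"
      using True unfolding C_def by (intro powr_mono) auto
    also have "\<dots> = 1 + a/(1+b)" using a0 b0 by (intro powr_log_cancel) (auto intro: add_pos_nonneg)
    finally have "(2 powr R_M - 1) * (1 + b) \<le> a" using b0
      by (simp add: field_simps)
    hence "sigmaB2 * ((2 powr R_M - 1) * (1 + b)) \<le> sigmaB2 * a"
      using noise by (intro mult_left_mono) auto
    moreover have "sigmaB2 * ((2 powr R_M - 1) * (1 + b)) = (2 powr R_M - 1) * (sigmaB2 + P_Uj * hUjB)"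
      using noise unfolding b_def by (simp add: field_simps)
    moreover have "sigmaB2 * a = P_Ui * hUiB" using noise unfolding a_def by simp
    ultimately have "(2 powr R_M - 1) * (sigmaB2 + P_Uj * hUjB) \<le> P_Ui * hUiB" by simp
    hence "P_Uj * hUjB \<le> P_Ui * hUiB / (2 powr R_M - 1) - sigmaB2"
      using g1 by (simp add: field_simps)
    hence "P_Uj \<le> Q" using gains unfolding Q_def by (simp add: field_simps)
    hence P1: "P_Uj \<le> min P_max (min Q Pstar)" using P2 by simp
    have "R_Uj \<le> C b" using c2 True unfolding a_def b_def by simp
    also have "\<dots> \<le> C (min P_max (min Q Pstar) * hUjB / sigmaB2)"
      unfolding b_def using P1 b0 gains noise b_def
      by (intro C_mono) (auto intro: divide_right_mono mult_right_mono)
    finally show ?thesis unfolding Let_def Pstar_def[symmetric] Q_def[symmetric]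
      by (simp add: a_def)
  next
    case False
    have "R_Uj \<le> C (b / (1 + a))" using c2 False unfolding a_def b_def by simp
    also have "\<dots> \<le> C ((min P_max Pstar * hUjB / sigmaB2) / (1 + a))"
    proof (rule C_mono)
      show "0 \<le> b / (1 + a)" using a0 b0 by simp
      have "b \<le> min P_max Pstar * hUjB / sigmaB2" unfolding b_def
        using P2 gains noise by (intro divide_right_mono mult_right_mono) auto
      thus "b / (1 + a) \<le> (min P_max Pstar * hUjB / sigmaB2) / (1 + a)"
        using a0 by (intro divide_right_mono) auto
    qed
    finally show ?thesis unfolding Let_def Pstar_def[symmetric] Q_def[symmetric]
      by (simp add: a_def)
  qed
qed

end
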